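(* Let $R$ be a regular ring with unity, and let $e,f$ be idempotents of $R$. Then $f(1-e)=f$ if and only if $M(f,e)=\{0\}$.
   Context: A ring is regular if for every $x$ there is $y$ with $xyx=x$. For idempotents $a,b$ of $R$, $M(a,b)=\{g \text{ idempotent in } R: ga=g \text{ and } bg=g\}$. (The condition $f(1-e)=f$ is the relation $f\,\omega^l\,(1-e)$.) *)

theory Defs
  imports Main
begin

definition regular_ring :: "'a::ring_1 itself \<Rightarrow> bool" where
  "regular_ring _ \<longleftrightarrow> (\<forall>x::'a. \<exists>y. x * y * x = x)"

definition idempotent :: "'a::ring_1 \<Rightarrow> bool" where
  "idempotent g \<longleftrightarrow> g * g = g"

definition M :: "'a::ring_1 \<Rightarrow> 'a \<Rightarrow> 'a set" where
  "M a b = {g. idempotent g \<and> g * a = g \<and> b * g = g}"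

end

theory Submission
  imports Defs
begin

theorem corollary2p3:
  fixes e f :: "'a::ring_1"
  assumes "regular_ring TYPE('a)"
    and "idempotent e" and "idempotent f"
  shows "f * (1 - e) = f \<longleftrightarrow> M f e = {0}"
proof
  assume h: "f * (1 - e) = f"
  hence fe: "f * e = 0" by (simp add: right_diff_distrib)
  show "M f e = {0}"
  proof
    show "M f e \<subseteq> {0}"
    proof
      fix g assume "g \<in> M f e"
      hence g: "g * g = g" "g * f = g" "e * g = g" by (auto simp: M_def idempotent_def)
      have "g = (g * f) * (e * g)" using g by simp
      also have "\<dots> = g * (f * e) * g" by (simp add: mult.assoc)
      finally show "g \<in> {0}" using fe by simp
    qed
    show "{0} \<subseteq> M f e" by (simp add: M_def idempotent_def)
  qed
next
  assume hM: "M f e = {0}"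
  define x where "x = f * e"
  obtain y where y: "x * y * x = x" using assms(1) unfolding regular_ring_def by blast
  define z where "z = y * x * y"
  have xzx: "x * z * x = x" unfolding z_def using y by (simp add: mult.assoc)
  have zxz: "z * x * z = z"
  proof -
    have "z * x * z = y * (x * y * x) * y * x * y" unfolding z_def by (simp add: mult.assoc)
    also have "\<dots> = y * (x * y * x) * y" using y by (simp add: mult.assoc)
    also have "\<dots> = z" unfolding z_def using y by simp
    finally show ?thesis .
  qed
  define g where "g = e * z * f"
  have ee: "e * e = e" and ff: "f * f = f" using assms(2,3) by (auto simp: idempotent_def)
  have "g * g = e * (z * x * z) * f" unfolding g_def x_def by (simp add: mult.assoc)
  hence gg: "g * g = g" using zxz g_def by simp
  have "g * f = g" unfolding g_def using ff by (simp add: mult.assoc)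
  moreover have "e * g = g" unfolding g_def using ee by (simp add: mult.assoc flip: mult.assoc[of e e])
  ultimately have "g \<in> M f e" using gg by (simp add: M_def idempotent_def)
  hence g0: "g = 0" using hM by simp
  have "x = f * g * e" using xzx unfolding g_def x_def by (simp add: mult.assoc)
  hence "x = 0" using g0 by simp
  thus "f * (1 - e) = f" unfolding x_def by (simp add: right_diff_distrib)
qed

end
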